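(* There exists a countable metrizable precompact abelian topological group which is not $g$-reversible.
   Context: All topological groups are assumed Hausdorff. A topological group $G$ is called $g$-reversible if every continuous automorphism of $G$ (i.e. every continuous group isomorphism of $G$ onto itself) is an open map. A Hausdorff abelian group is precompact if it is a subgroup of a compact Hausdorff group, equivalently for each neighbourhood $U$ of $0$ there is a finite $F$ with $U+F=G$. *)

theory Defs
  imports "HOL-Analysis.Analysis" "HOL-Algebra.Algebra"
begin

definition topological_group :: "('a, 'b) monoid_scheme \<Rightarrow> 'a topology \<Rightarrow> bool" where
  "topological_group M T \<longleftrightarrow>
     group M \<and> topspace T = carrier M \<and> Hausdorff_space T \<and>
     continuous_map (prod_topology T T) T (\<lambda>p. fst p \<otimes>\<^bsub>M\<^esub> snd p) \<and>
     continuous_map T T (\<lambda>x. inv\<^bsub>M\<^esub> x)"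

definition precompact_group :: "('a, 'b) monoid_scheme \<Rightarrow> 'a topology \<Rightarrow> bool" where
  "precompact_group M T \<longleftrightarrow>
     (\<forall>U. U \<subseteq> topspace T \<and> \<one>\<^bsub>M\<^esub> \<in> T interior_of U \<longrightarrow>
        (\<exists>F. finite F \<and> F \<subseteq> carrier M \<and>
             carrier M = {u \<otimes>\<^bsub>M\<^esub> f | u f. u \<in> U \<and> f \<in> F}))"

definition g_reversible :: "('a, 'b) monoid_scheme \<Rightarrow> 'a topology \<Rightarrow> bool" where
  "g_reversible M T \<longleftrightarrow>
     (\<forall>f. f \<in> iso M M \<and> continuous_map T T f \<longrightarrow> open_map T T f)"

end

theory Submission
  imports Defs
begin

unbundle bit_operations_syntax

definition vv :: "nat \<Rightarrow> nat" where "vv a = (LEAST n. bit a n)"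

definition dd :: "nat \<Rightarrow> nat \<Rightarrow> real" where
  "dd x y = (if x = y then 0 else (1/2) ^ vv (x XOR y))"

lemma ex_bit: "(a::nat) \<noteq> 0 \<Longrightarrow> bit a (vv a)"
proof -
  assume "a \<noteq> 0"
  then have "\<exists>n. bit a n" using bit_eq_iff[of a 0] by auto
  then show ?thesis unfolding vv_def by (rule LeastI_ex)
qed

lemma below_vv: "n < vv a \<Longrightarrow> \<not> bit a n"
  unfolding vv_def using not_less_Least by blast

lemma xor_eq0: "((x::nat) XOR y = 0) = (x = y)"
  by (metis xor_self_eq xor.left_neutral xor.assoc)

lemma L1: "take_bit k (x XOR y) = 0 \<Longrightarrow> dd x y \<le> (1/2)^k"
proof (cases "x = y")
  case False
  assume h: "take_bit k (x XOR y) = 0"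
  let ?a = "x XOR y"
  have a: "?a \<noteq> 0" using False xor_eq0 by blast
  have "k \<le> vv ?a"
  proof (rule ccontr)
    assume "\<not> k \<le> vv ?a"
    then have "bit (take_bit k ?a) (vv ?a)" using ex_bit[OF a] by (simp add: bit_take_bit_iff del: take_bit_xor)
    then show False using h by (simp del: take_bit_xor)
  qed
  then show ?thesis using False by (simp add: dd_def power_decreasing)
qed (simp add: dd_def)

lemma L2: "dd x y < (1/2)^k \<Longrightarrow> take_bit (Suc k) (x XOR y) = 0"
proof (cases "x = y")
  case False
  assume h: "dd x y < (1/2)^k"
  let ?a = "x XOR y"
  have "(1/2::real)^vv ?a < (1/2)^k" using h False by (simp add: dd_def)
  then have "k < vv ?a" by (simp add: power_strict_decreasing_iff)
  then show ?thesis
    by (intro bit_eqI) (auto simp: bit_take_bit_iff below_vv simp del: take_bit_xor)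
qed simp

lemma dd_metric: "Metric_space UNIV dd"
proof
  fix x y z :: nat
  show "0 \<le> dd x y" by (simp add: dd_def)
  show "dd x y = dd y x" by (simp add: dd_def xor.commute)
  show "(dd x y = 0) = (x = y)" by (simp add: dd_def)
  show "dd x z \<le> dd x y + dd y z"
  proof (cases "x = y \<or> y = z \<or> x = z")
    case True
    then show ?thesis by (auto simp: dd_def)
  next
    case False
    let ?a = "x XOR y" and ?b = "y XOR z" and ?c = "x XOR z"
    have cn: "?c \<noteq> 0" using False xor_eq0 by blast
    have bc: "bit ?c (vv ?c)" using ex_bit[OF cn] .
    have "min (vv ?a) (vv ?b) \<le> vv ?c"
    proof (rule ccontr)
      assume "\<not> ?thesis"
      then have "\<not> bit ?a (vv ?c)" "\<not> bit ?b (vv ?c)" using below_vv by auto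
      then show False using bc by (simp add: bit_xor_iff)
    qed
    then have "(1/2::real)^vv ?c \<le> (1/2)^vv ?a \<or> (1/2::real)^vv ?c \<le> (1/2)^vv ?b"
      by (auto simp: power_decreasing min_def split: if_splits)
    moreover have "0 \<le> (1/2::real)^vv ?a" "0 \<le> (1/2::real)^vv ?b" by auto
    ultimately have "(1/2::real)^vv ?c \<le> (1/2)^vv ?a + (1/2)^vv ?b"
      by (elim disjE) linarith+
    then show ?thesis using False by (simp add: dd_def)
  qed
qed

interpretation DM: Metric_space UNIV dd by (rule dd_metric)

definition MM :: "nat monoid" where "MM = \<lparr>carrier = UNIV, mult = (\<lambda>x y. x XOR y), one = 0\<rparr>"

lemma MM_comm: "comm_group MM"
  by (rule comm_groupI) (simp_all add: MM_def xor.assoc xor.commute xor.left_commute, metis xor_self_eq)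

lemma MM_inv: "inv\<^bsub>MM\<^esub> x = x"
proof -
  interpret comm_group MM by (rule MM_comm)
  show ?thesis by (rule inv_equality) (auto simp: MM_def)
qed

lemma small_exp: "(r::real) > 0 \<Longrightarrow> \<exists>k. (1/2::real)^k < r"
  by (simp add: real_arch_pow_inv)

lemma half_pow_Suc_lt: "(1/2::real)^k < e \<Longrightarrow> (1/2::real)^Suc k < e"
proof -
  assume "(1/2::real)^k < e"
  moreover have "(1/2::real)^Suc k \<le> (1/2)^k" by (rule power_decreasing) auto
  ultimately show ?thesis by linarith
qed

lemma MM_top: "topological_group MM DM.mtopology"
  unfolding topological_group_def
proof (intro conjI)
  show "group MM" using MM_comm comm_group.axioms(2) by blast
  show "topspace DM.mtopology = carrier MM" by (simp add: MM_def)
  show "Hausdorff_space DM.mtopology" by (rule DM.Hausdorff_space_mtopology)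
  show "continuous_map DM.mtopology DM.mtopology (\<lambda>x. inv\<^bsub>MM\<^esub> x)"
    by (simp add: MM_inv)
  show "continuous_map (prod_topology DM.mtopology DM.mtopology) DM.mtopology
          (\<lambda>p. fst p \<otimes>\<^bsub>MM\<^esub> snd p)"
    unfolding DM.continuous_map_to_metric
  proof (intro ballI allI impI)
    fix p :: "nat \<times> nat" and e :: real
    assume "e > 0"
    then obtain k where k: "(1/2::real)^k < e" using small_exp by blast
    obtain x y where p: "p = (x, y)" by fastforce
    let ?U = "DM.mball x ((1/2)^k) \<times> DM.mball y ((1/2)^k)"
    show "\<exists>U. openin (prod_topology DM.mtopology DM.mtopology) U \<and> p \<in> U \<and>
              (\<forall>q\<in>U. fst q \<otimes>\<^bsub>MM\<^esub> snd q \<in> DM.mball (fst p \<otimes>\<^bsub>MM\<^esub> snd p) e)"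
    proof (intro exI conjI ballI)
      show "openin (prod_topology DM.mtopology DM.mtopology) ?U"
        by (simp add: openin_prod_Times_iff)
      show "p \<in> ?U" using p by simp
      fix q assume q: "q \<in> ?U"
      obtain x1 y1 where q1: "q = (x1, y1)" by fastforce
      have "take_bit (Suc k) (x XOR x1) = 0" "take_bit (Suc k) (y XOR y1) = 0"
        using q q1 L2 by auto
      then have "take_bit (Suc k) ((x XOR y) XOR (x1 XOR y1)) = 0"
        by (metis take_bit_xor xor.assoc xor.left_commute xor.left_neutral)
      then have "dd (x XOR y) (x1 XOR y1) \<le> (1/2)^Suc k" by (rule L1)
      also have "\<dots> < e" using k by (rule half_pow_Suc_lt)
      finally show "fst q \<otimes>\<^bsub>MM\<^esub> snd q \<in> DM.mball (fst p \<otimes>\<^bsub>MM\<^esub> snd p) e"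
        using p q1 by (simp add: MM_def)
    qed
  qed
qed


lemma MM_precompact: "precompact_group MM DM.mtopology"
  unfolding precompact_group_def
proof (intro allI impI)
  fix U assume "U \<subseteq> topspace DM.mtopology \<and> \<one>\<^bsub>MM\<^esub> \<in> DM.mtopology interior_of U"
  then have "0 \<in> DM.mtopology interior_of U" by (simp add: MM_def)
  then obtain V where V: "openin DM.mtopology V" "0 \<in> V" "V \<subseteq> U"
    by (meson interior_of_subset openin_interior_of)
  then obtain r where r: "r > 0" "DM.mball 0 r \<subseteq> V" using DM.openin_mtopology by blast
  then obtain k where k: "(1/2::real)^k < r" using small_exp by blast
  show "\<exists>F. finite F \<and> F \<subseteq> carrier MM \<and>
          carrier MM = {u \<otimes>\<^bsub>MM\<^esub> f | u f. u \<in> U \<and> f \<in> F}"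
  proof (intro exI conjI)
    show "finite {..<(2::nat)^k}" by simp
    show "{..<(2::nat)^k} \<subseteq> carrier MM" by (simp add: MM_def)
    show "carrier MM = {u \<otimes>\<^bsub>MM\<^esub> f | u f. u \<in> U \<and> f \<in> {..<(2::nat)^k}}"
    proof -
      have "x \<in> {u \<otimes>\<^bsub>MM\<^esub> f | u f. u \<in> U \<and> f \<in> {..<(2::nat)^k}}" for x
      proof -
        let ?f = "take_bit k x" and ?u = "x XOR take_bit k x"
        have "take_bit k (0 XOR ?u) = 0" by simp
        then have "dd 0 ?u \<le> (1/2)^k" by (rule L1)
        then have "?u \<in> DM.mball 0 r" using k by simp
        then have "?u \<in> U" using r V by blast
        moreover have "?f < 2^k" by (simp add: take_bit_nat_less_exp)
        moreover have "x = ?u \<otimes>\<^bsub>MM\<^esub> ?f" by (simp add: MM_def xor.assoc)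
        ultimately show ?thesis by (intro CollectI exI[of _ ?u] exI[of _ ?f]) simp
      qed
      moreover have "carrier MM = UNIV" by (simp add: MM_def)
      ultimately show ?thesis by blast
    qed
  qed
qed

definition gg :: "nat \<Rightarrow> nat" where "gg x = x XOR drop_bit 1 x"

lemma gg_hom: "gg (x XOR y) = gg x XOR gg y"
  by (rule bit_eqI) (auto simp: gg_def bit_xor_iff bit_drop_bit_eq)

lemma gg_zero: "gg a = 0 \<Longrightarrow> a = 0"
proof -
  assume "gg a = 0"
  then have "a = drop_bit 1 a" unfolding gg_def using xor_eq0 by blast
  then have "a = a div 2" by (simp add: drop_bit_eq_div)
  then show "a = 0" by linarith
qed

lemma gg_inj: "inj gg"
proof (rule injI)
  fix x y assume "gg x = gg y"
  then have "gg (x XOR y) = 0" by (simp add: gg_hom)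
  then show "x = y" using gg_zero xor_eq0 by blast
qed

lemma gg_tb: "take_bit (Suc k) a = 0 \<Longrightarrow> take_bit k (gg a) = 0"
proof -
  assume h: "take_bit (Suc k) a = 0"
  have "take_bit k a = take_bit k (take_bit (Suc k) a)" by simp
  then have 1: "take_bit k a = 0" using h by simp
  have "take_bit k (drop_bit 1 a) = drop_bit 1 (take_bit (k + 1) a)" by (rule take_bit_drop_bit)
  then have 2: "take_bit k (drop_bit 1 a) = 0" using h by simp
  show ?thesis unfolding gg_def take_bit_xor 1 2 by simp
qed

lemma xor_lt: "(a::nat) < 2^k \<Longrightarrow> b < 2^k \<Longrightarrow> a XOR b < 2^k"
  by (metis take_bit_nat_eq_self_iff take_bit_xor)

lemma gg_surj: "surj gg"
proof -
  have "y \<in> range gg" for y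
  proof -
    obtain k where "y < 2^k" using less_exp by blast
    have sub: "gg ` {..<2^k} \<subseteq> {..<2^k}"
    proof
      fix z assume "z \<in> gg ` {..<(2::nat)^k}"
      then obtain a where a: "a < 2^k" "z = gg a" by auto
      have "drop_bit 1 a \<le> a" by (simp add: drop_bit_eq_div)
      then have "drop_bit 1 a < 2^k" using a by linarith
      then show "z \<in> {..<2^k}" using a xor_lt by (simp add: gg_def)
    qed
    have "gg ` {..<2^k} = {..<2^k}"
      by (rule endo_inj_surj) (use sub gg_inj inj_on_subset in \<open>auto intro: inj_on_subset[OF gg_inj]\<close>)
    then show ?thesis using \<open>y < 2^k\<close> by blast
  qed
  then show ?thesis by blast
qed

lemma gg_mask: "gg (mask (Suc m)) = 2^m"
  by (rule bit_eqI) (auto simp: gg_def bit_xor_iff bit_mask_iff bit_drop_bit_eq bit_exp_iff)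

lemma MM_not_rev: "\<not> g_reversible MM DM.mtopology"
  unfolding g_reversible_def
proof
  assume H: "\<forall>f. f \<in> iso MM MM \<and> continuous_map DM.mtopology DM.mtopology f \<longrightarrow>
     open_map DM.mtopology DM.mtopology f"
  have iso: "gg \<in> iso MM MM"
    unfolding iso_def hom_def bij_betw_def using gg_inj gg_surj by (simp add: MM_def gg_hom)
  have cont: "continuous_map DM.mtopology DM.mtopology gg"
    unfolding DM.continuous_map_to_metric
  proof (intro ballI allI impI)
    fix x and e :: real
    assume "e > 0"
    then obtain k where k: "(1/2::real)^k < e" using small_exp by blast
    show "\<exists>U. openin DM.mtopology U \<and> x \<in> U \<and> (\<forall>y\<in>U. gg y \<in> DM.mball (gg x) e)"
    proof (intro exI conjI ballI)
      show "openin DM.mtopology (DM.mball x ((1/2)^k))" by simp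
      show "x \<in> DM.mball x ((1/2)^k)" by simp
      fix y assume "y \<in> DM.mball x ((1/2)^k)"
      then have t: "take_bit (Suc k) (x XOR y) = 0" using L2 by auto
      have "take_bit k (gg (x XOR y)) = 0"
        using t by (rule gg_tb)
      then have "dd (gg x) (gg y) \<le> (1/2)^k" by (intro L1) (simp add: gg_hom)
      then show "gg y \<in> DM.mball (gg x) e" using k by simp
    qed
  qed
  have om: "open_map DM.mtopology DM.mtopology gg" using H iso cont by blast
  let ?V = "DM.mball 0 ((1/2)^1)"
  have "openin DM.mtopology (gg ` ?V)" using om unfolding open_map_def by simp
  moreover have "0 \<in> gg ` ?V" using gg_hom[of 0 0] by force
  ultimately obtain r where r: "r > 0" "DM.mball 0 r \<subseteq> gg ` ?V"
    using DM.openin_mtopology by meson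
  then obtain m where m: "(1/2::real)^m < r" using small_exp by blast
  have "take_bit m (0 XOR 2^m) = (0::nat)" by simp
  then have "dd 0 (2^m) \<le> (1/2)^m" by (rule L1)
  then have "2^m \<in> gg ` ?V" using r m by auto
  then obtain x where x: "x \<in> ?V" "gg x = 2^m" by auto
  have "take_bit 1 x = 0" using x L2[of 0 x 0] by simp
  moreover have "x = mask (Suc m)" using x gg_mask gg_inj by (metis injD)
  moreover have "bit (take_bit 1 x) 0 = bit x 0" by (simp add: bit_take_bit_iff bit_0)
  moreover have "bit (mask (Suc m) :: nat) 0" by (simp add: bit_mask_iff)
  ultimately show False by simp
qed

theorem theorem6p5:
  shows "\<exists>(M :: nat monoid) (T :: nat topology).
           comm_group M \<and> topological_group M T \<and> countable (carrier M) \<and>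
           metrizable_space T \<and> precompact_group M T \<and> \<not> g_reversible M T"
proof (intro exI conjI)
  show "countable (carrier MM)" by (simp add: MM_def)
qed (rule MM_comm MM_top MM_precompact MM_not_rev DM.metrizable_space_mtopology)+

end
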